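(* Let $n \ge 1$ and let $X_1,\dots,X_n$ be observations from $\mathcal{N}(\mu,1)$ with sample mean $\bar x$, and let $z=\sqrt{n}\,\bar x$. For a prior variance $\tau^2>0$ define the Bayes factor \[ \mathrm{BF}_{01}(\bar x;\tau^2) = \sqrt{1+n\tau^2}\,\exp\left\{-\frac{z^2}{2}\cdot\frac{n\tau^2}{1+n\tau^2}\right\}. \] Suppose the result is two-sided statistically significant at level $\alpha = 0.05$, i.e. $|z| > 1.96$. Let $\tau^{*2} = k^*/n$, where $k^*$ is the unique $k>0$ with $(1+k)\ln(1+k) = z^2 k$. Then there exist prior variances $\tau_1^2 < \tau^{*2} < \tau_2^2$ such that $\mathrm{BF}_{01}(\bar x;\tau_1^2) < 1$ and $\mathrm{BF}_{01}(\bar x;\tau_2^2) > 1$.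
   Context: Model: testing $H_0:\mu=0$ versus $H_1:\mu\neq0$ in the normal model with known variance $\sigma^2=1$, with prior probability $1/2$ on $H_0$ and prior $\mu\mid H_1\sim\mathcal{N}(0,\tau^2)$. $\mathrm{BF}_{01}$ is the Bayes factor in favour of $H_0$; $\mathrm{BF}_{01}<1$ is interpreted as concluding in favour of $H_1$ and $\mathrm{BF}_{01}>1$ as concluding in favour of $H_0$. The quantity $\tau^{*2}$ is the critical prior variance (flip point divided by $n$). *)

theory Defs
  imports "HOL-Analysis.Analysis"
begin

definition zstat :: "nat \<Rightarrow> real \<Rightarrow> real" where
  "zstat n xbar = sqrt (real n) * xbar"

definition BF01 :: "nat \<Rightarrow> real \<Rightarrow> real \<Rightarrow> real" where
  "BF01 n xbar tau2 =
     sqrt (1 + real n * tau2) *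
     exp (- ((zstat n xbar)^2 / 2) * (real n * tau2 / (1 + real n * tau2)))"

definition kstar :: "real \<Rightarrow> real" where
  "kstar z = (THE k. k > 0 \<and> (1 + k) * ln (1 + k) = z^2 * k)"

definition tau_star_sq :: "nat \<Rightarrow> real \<Rightarrow> real" where
  "tau_star_sq n xbar = kstar (zstat n xbar) / real n"

end

theory Submission
  imports Defs
begin

definition hh :: "real \<Rightarrow> real" where
  "hh k = (1 + k) * ln (1 + k) / k"

lemma hh_deriv:
  assumes "0 < x"
  shows "DERIV hh x :> (x - ln (1 + x)) / x^2"
proof -
  have "DERIV (\<lambda>k. (1 + k) * ln (1 + k) / k) x :>
     ((1 * ln (1 + x) + (1 + x) * (1 / (1 + x))) * x - (1 + x) * ln (1 + x) * 1) / (x * x)"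
    using assms by (auto intro!: derivative_eq_intros)
  moreover have "((1 * ln (1 + x) + (1 + x) * (1 / (1 + x))) * x - (1 + x) * ln (1 + x) * 1) / (x * x)
      = (x - ln (1 + x)) / x^2"
    using assms by (simp add: field_simps power2_eq_square)
  ultimately show ?thesis unfolding hh_def[abs_def] by simp
qed

lemma hh_mono:
  assumes "0 < a" "a < b"
  shows "hh a < hh b"
proof (rule DERIV_pos_imp_increasing[OF assms(2)])
  fix x assume "a \<le> x" "x \<le> b"
  then have x: "0 < x" using assms by auto
  have "ln (1 + x) < x" using ln_add_one_self_less_self[OF x] .
  then have "0 < (x - ln (1 + x)) / x^2" using x by simp
  then show "\<exists>y. DERIV hh x :> y \<and> 0 < y" using hh_deriv[OF x] by blast
qed

lemma eq_iff_hh: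
  assumes "0 < k"
  shows "((1 + k) * ln (1 + k) = c * k) \<longleftrightarrow> hh k = c"
  "((1 + k) * ln (1 + k) < c * k) \<longleftrightarrow> hh k < c"
  "((1 + k) * ln (1 + k) > c * k) \<longleftrightarrow> hh k > c"
  using assms by (auto simp: hh_def field_simps)

lemma root_exists:
  fixes c :: real
  assumes "c > 2"
  shows "\<exists>k>0. (1 + k) * ln (1 + k) = c * k"
proof -
  define f where "f k = (1 + k) * ln (1 + k) - c * k" for k :: real
  define K where "K = exp (2 * c) - 1"
  have "ln (2::real) < 1" by (rule ln_2_less_1)
  then have f1: "f 1 \<le> 0" using assms by (simp add: f_def)
  have e: "exp (2 * c) \<ge> 1 + 2 * c" by (rule exp_ge_add_one_self)
  have K1: "1 \<le> K" using e assms unfolding K_def by linarith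
  have "f K = exp (2 * c) * (2 * c) - c * (exp (2 * c) - 1)" by (simp add: f_def K_def)
  also have "\<dots> = c * exp (2 * c) + c" by (simp add: algebra_simps)
  finally have fK: "0 \<le> f K" using assms by (smt (verit) exp_gt_zero mult_pos_pos)
  have cont: "\<forall>x. 1 \<le> x \<and> x \<le> K \<longrightarrow> isCont f x"
    unfolding f_def by (auto intro!: continuous_intros)
  obtain k where k: "1 \<le> k" "k \<le> K" "f k = 0" using IVT[of f 1 0 K, OF f1 fK K1 cont] by blast
  then show ?thesis by (intro exI[of _ k]) (auto simp: f_def)
qed


lemma BF_less_iff:
  assumes "0 < k"
  shows "sqrt (1 + k) * exp (- (c / 2) * (k / (1 + k))) =
         exp ((ln (1 + k) * (1 + k) - c * k) / (2 * (1 + k)))"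
proof -
  have "sqrt (1 + k) = (1 + k) powr (1/2)"
    using assms by (simp add: powr_half_sqrt)
  also have "\<dots> = exp (ln (1 + k) / 2)"
    using assms by (simp add: powr_def)
  finally have s: "sqrt (1 + k) = exp (ln (1 + k) / 2)" .
  have a: "ln (1 + k) / 2 + - (c / 2) * (k / (1 + k)) = (ln (1 + k) * (1 + k) - c * k) / (2 * (1 + k))"
    using assms by (simp add: field_simps)
  show ?thesis unfolding s exp_add[symmetric] a ..
qed

theorem theorem2:
  fixes n :: nat and xbar :: real
  assumes "n \<ge> 1"
    and "\<bar>zstat n xbar\<bar> > 1.96"
  shows "\<exists>tau1 tau2. 0 < tau1 \<and> tau1 < tau_star_sq n xbar \<and> tau_star_sq n xbar < tau2
           \<and> BF01 n xbar tau1 < 1 \<and> BF01 n xbar tau2 > 1"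
proof -
  define z where "z = zstat n xbar"
  define c where "c = z^2"
  have "1.96 < \<bar>z\<bar>" using assms(2) z_def by simp
  then have "1.96 * 1.96 < \<bar>z\<bar> * \<bar>z\<bar>" by (intro mult_strict_mono) auto
  then have c2: "c > 2" by (simp add: c_def power2_eq_square)
  obtain k0 where k0: "k0 > 0" "(1 + k0) * ln (1 + k0) = c * k0" using root_exists[OF c2] by blast
  have uniq: "k = k0" if "k > 0" "(1 + k) * ln (1 + k) = c * k" for k
  proof -
    have "hh k = c" "hh k0 = c" using eq_iff_hh that k0 by auto
    then show ?thesis using hh_mono[of k k0] hh_mono[of k0 k] that k0
      by (cases k k0 rule: linorder_cases) auto
  qed
  have ks: "kstar z = k0" unfolding kstar_def c_def[symmetric]
    proof (rule the_equality)
    show "k0 > 0 \<and> (1 + k0) * ln (1 + k0) = c * k0" using k0 by blast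
  next
    fix k assume "k > 0 \<and> (1 + k) * ln (1 + k) = c * k"
    then show "k = k0" using uniq by blast
  qed
  have hk0: "hh k0 = c" using eq_iff_hh k0 by auto
  have np: "real n > 0" using assms(1) by simp
  have tss: "tau_star_sq n xbar = k0 / real n" using ks z_def tau_star_sq_def by simp
  define t1 where "t1 = k0 / 2 / real n"
  define t2 where "t2 = 2 * k0 / real n"
  have nt1: "real n * t1 = k0 / 2" using np by (simp add: t1_def)
  have nt2: "real n * t2 = 2 * k0" using np by (simp add: t2_def)
  have h1: "hh (k0/2) < c" using hh_mono[of "k0/2" k0] k0 hk0 by simp
  have h2: "hh (2*k0) > c" using hh_mono[of k0 "2*k0"] k0 hk0 by simp
  have g1: "ln (1 + k0/2) * (1 + k0/2) - c * (k0/2) < 0"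
    using eq_iff_hh(2)[of "k0/2" c] h1 k0 by (simp add: mult.commute)
  have g2: "ln (1 + 2*k0) * (1 + 2*k0) - c * (2*k0) > 0"
    using eq_iff_hh(3)[of "2*k0" c] h2 k0 by (simp add: mult.commute)
  have BF1: "BF01 n xbar t1 = exp ((ln (1 + k0/2) * (1 + k0/2) - c * (k0/2)) / (2 * (1 + k0/2)))"
    unfolding BF01_def nt1 z_def[symmetric] c_def[symmetric]
    using BF_less_iff[of "k0/2" c] k0 by simp
  have BF2: "BF01 n xbar t2 = exp ((ln (1 + 2*k0) * (1 + 2*k0) - c * (2*k0)) / (2 * (1 + 2*k0)))"
    unfolding BF01_def nt2 z_def[symmetric] c_def[symmetric]
    using BF_less_iff[of "2*k0" c] k0 by simp
  have "BF01 n xbar t1 < 1" unfolding BF1 using g1 k0 by (simp add: divide_neg_pos)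
  moreover have "BF01 n xbar t2 > 1" unfolding BF2 using g2 k0 by simp
  moreover have "0 < t1" using k0 np by (simp add: t1_def)
  moreover have "t1 < k0 / real n" unfolding t1_def
    by (rule divide_strict_right_mono) (use k0 np in auto)
  moreover have "k0 / real n < t2" unfolding t2_def
    by (rule divide_strict_right_mono) (use k0 np in auto)
  ultimately show ?thesis unfolding tss by blast
qed

end
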